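(* For every $n\ge2$, $$\mathrm{Var}\big(\tau^{(n)}\big)=\frac{n+1}{n-1}H_{n,2}-\frac{2(n+1)}{(n-1)^2}H_{n,1}^2+\frac{4(n+1)}{(n-1)^2}H_{n,1}-\frac{4}{n-1}-\frac{4}{(n-1)^2},$$ which tends to $\pi^2/6$ as $n\to\infty$.
   Context: Fix $n\ge 2$. A Yule tree with speciation rate 1 on $n$ tips: start with a single lineage; each lineage independently splits into two at rate 1; the process is stopped just before the $n$-th speciation event, so the tree has $n$ tips and $n-1$ speciation (internal) nodes, numbered $1,\dots,n-1$ chronologically from the root. For $i=1,\dots,n$ let $T_i$ be the length of the time interval during which there are exactly $i$ lineages; the $T_i$ are independent, $T_i\sim\mathrm{Exp}(i)$ (rate $i$), the $k$-th speciation occurs at time $T_1+\dots+T_k$, and at each speciation the splitting lineage is uniformly chosen among current lineages, independently of the $T_i$. Choose an unordered pair of distinct tips uniformly at random and let $\kappa_n\in\{1,\dots,n-1\}$ be the index of the speciation event at which their lineages split; the coalescent time of the pair is $\tau^{(n)}=T_{\kappa_n+1}+\dots+T_n$. $H_{n,r}=\sum_{i=1}^n i^{-r}$. *)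

theory Defs
  imports "HOL-Probability.Probability"
begin

text \<open>A lineage is recorded by its path from the root: the list of
  (speciation index, side) pairs of the speciation events it passed through.\<close>
type_synonym lineage = "(nat \<times> bool) list"

text \<open>Speciation: lineage i of the current list L splits at the event with
  index length L (the k-th speciation happens when there are k lineages).\<close>
definition split_lineage :: "lineage list \<Rightarrow> nat \<Rightarrow> lineage list" where
  "split_lineage L i =
     take i L @ [L ! i @ [(length L, False)], L ! i @ [(length L, True)]] @ drop (Suc i) L"

text \<open>Tips of the Yule tree (topology only) after growing to m lineages;
  the splitting lineage is uniform among current lineages.\<close>
fun yule_tips :: "nat \<Rightarrow> lineage list pmf" where
  "yule_tips 0 = return_pmf [[]]"
| "yule_tips (Suc 0) = return_pmf [[]]"
| "yule_tips (Suc (Suc m)) =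
     bind_pmf (yule_tips (Suc m))
       (\<lambda>L. map_pmf (split_lineage L) (pmf_of_set {..<length L}))"

fun split_idx :: "lineage \<Rightarrow> lineage \<Rightarrow> nat" where
  "split_idx (x # xs) (y # ys) = (if x = y then split_idx xs ys else fst x)"
| "split_idx _ _ = 0"

definition kappa_pmf :: "nat \<Rightarrow> nat pmf" where
  "kappa_pmf n = bind_pmf (yule_tips n)
     (\<lambda>L. map_pmf (\<lambda>(a, b). split_idx (L ! a) (L ! b))
            (pmf_of_set {(a, b). a < b \<and> b < n}))"

definition yule_space :: "nat \<Rightarrow> (nat \<times> (nat \<Rightarrow> real)) measure" where
  "yule_space n = measure_pmf (kappa_pmf n) \<Otimes>\<^sub>M
     (\<Pi>\<^sub>M i\<in>{1..n}. density lborel (exponential_density (real i)))"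

definition coal_time :: "nat \<Rightarrow> nat \<times> (nat \<Rightarrow> real) \<Rightarrow> real" where
  "coal_time n \<omega> = (\<Sum>i\<in>{Suc (fst \<omega>)..n}. snd \<omega> i)"

definition H :: "nat \<Rightarrow> nat \<Rightarrow> real" where
  "H n r = (\<Sum>i=1..n. 1 / real i ^ r)"

end

theory Submission
  imports Defs "HOL-Real_Asymp.Real_Asymp"
begin


lemma sidx_div:
  assumes "b \<noteq> c"
  shows "split_idx (p @ (j,b) # xs) (p @ (j,c) # ys) = j"
  using assms by (induction p) auto

definition inv_tips :: "lineage list \<Rightarrow> bool" where
  "inv_tips L \<longleftrightarrow> distinct L \<and> (\<forall>u\<in>set L. \<forall>v\<in>set L. u \<noteq> v \<longrightarrow>
      (\<exists>p j b xs ys. u = p @ (j,b) # xs \<and> v = p @ (j,\<not>b) # ys))"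

lemma inv_sym:
  assumes "inv_tips L" "u \<in> set L" "v \<in> set L" "u \<noteq> v"
  shows "split_idx u v = split_idx v u"
proof -
  obtain p j b xs ys where "u = p @ (j,b) # xs" "v = p @ (j,\<not>b) # ys"
    using assms unfolding inv_tips_def by blast
  then show ?thesis using sidx_div[of b "\<not>b"] sidx_div[of "\<not>b" b] by auto
qed

lemma inv_ext:
  assumes "inv_tips L" "u \<in> set L" "v \<in> set L" "u \<noteq> v"
  shows "split_idx (u @ s) v = split_idx u v" "split_idx v (u @ s) = split_idx v u"
proof -
  obtain p j b xs ys where "u = p @ (j,b) # xs" "v = p @ (j,\<not>b) # ys"
    using assms unfolding inv_tips_def by blast
  then show "split_idx (u @ s) v = split_idx u v" "split_idx v (u @ s) = split_idx v u"
    using sidx_div[of b "\<not>b"] sidx_div[of "\<not>b" b] by auto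
qed

lemma split_decomp:
  assumes "i < length L"
  shows "split_lineage L i = take i L @ [L!i @ [(length L, False)], L!i @ [(length L, True)]] @ drop (Suc i) L"
  by (simp add: split_lineage_def)

lemma split_set:
  assumes "i < length L" "distinct L"
  shows "set (split_lineage L i) = (set L - {L!i}) \<union> {L!i @ [(length L, False)], L!i @ [(length L, True)]}"
proof -
  have L: "L = take i L @ L!i # drop (Suc i) L" using assms by (simp add: id_take_nth_drop)
  have "distinct (take i L @ L!i # drop (Suc i) L)" using L assms by simp
  then have "L!i \<notin> set (take i L) \<union> set (drop (Suc i) L)" by auto
  moreover have "set L = set (take i L) \<union> {L!i} \<union> set (drop (Suc i) L)"
    by (subst L) auto
  ultimately show ?thesis unfolding split_lineage_def by auto
qed

lemma split_length: "i < length L \<Longrightarrow> length (split_lineage L i) = Suc (length L)"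
  by (simp add: split_lineage_def)

lemma inv_split:
  assumes "inv_tips L" "i < length L"
  shows "inv_tips (split_lineage L i)"
proof -
  let ?w = "L!i"
  let ?c0 = "?w @ [(length L, False)]" and ?c1 = "?w @ [(length L, True)]"
  have d: "distinct L" using assms unfolding inv_tips_def by auto
  have w: "?w \<in> set L" using assms by simp
  have cnot: "?c0 \<notin> set L - {?w}" "?c1 \<notin> set L - {?w}"
  proof -
    { fix c s v assume c: "c = ?w @ s" "v \<in> set L" "v \<noteq> ?w" "c = v"
      obtain p j b xs ys where "?w = p @ (j,b) # xs" "v = p @ (j,\<not>b) # ys"
        using assms(1) w c unfolding inv_tips_def by blast
      with c have False by auto }
    then show "?c0 \<notin> set L - {?w}" "?c1 \<notin> set L - {?w}" by blast+
  qed
  have dist: "distinct (split_lineage L i)"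
  proof -
    have L: "L = take i L @ ?w # drop (Suc i) L" using assms by (simp add: id_take_nth_drop)
    have dd: "distinct (take i L @ ?w # drop (Suc i) L)" using L d by simp
    have s: "set (take i L) \<subseteq> set L - {?w}" "set (drop (Suc i) L) \<subseteq> set L - {?w}"
      using dd by (auto dest: in_set_takeD in_set_dropD)
    show ?thesis unfolding split_lineage_def using dd s cnot by auto
  qed
  have pairs: "\<exists>p j b xs ys. u = p @ (j,b) # xs \<and> v = p @ (j,\<not>b) # ys"
    if u: "u \<in> set (split_lineage L i)" and v: "v \<in> set (split_lineage L i)" and uv: "u \<noteq> v" for u v
  proof -
    have S: "set (split_lineage L i) = (set L - {?w}) \<union> {?c0, ?c1}"
      using split_set[OF assms(2) d] .
    have ext: "\<exists>p j b xs ys. x @ s = p @ (j,b) # xs \<and> y = p @ (j,\<not>b) # ys"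
      if "\<exists>p j b xs ys. x = p @ (j,b) # xs \<and> y = p @ (j,\<not>b) # ys" for x y s
      using that by (metis append.assoc append_Cons)
    have ext2: "\<exists>p j b xs ys. y = p @ (j,b) # xs \<and> x @ s = p @ (j,\<not>b) # ys"
      if "\<exists>p j b xs ys. y = p @ (j,b) # xs \<and> x = p @ (j,\<not>b) # ys" for x y s
      using that by (metis append.assoc append_Cons)
    have base: "\<exists>p j b xs ys. x = p @ (j,b) # xs \<and> y = p @ (j,\<not>b) # ys"
      if "x \<in> set L" "y \<in> set L" "x \<noteq> y" for x y
      using assms(1) that unfolding inv_tips_def by blast
    have c01: "\<exists>p j b xs ys. ?c0 = p @ (j,b) # xs \<and> ?c1 = p @ (j,\<not>b) # ys"
      by (intro exI[of _ ?w] exI[of _ "length L"] exI[of _ False] exI[of _ "[]"]) auto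
    have c10: "\<exists>p j b xs ys. ?c1 = p @ (j,b) # xs \<and> ?c0 = p @ (j,\<not>b) # ys"
      by (intro exI[of _ ?w] exI[of _ "length L"] exI[of _ True] exI[of _ "[]"]) auto
    have uc: "u \<in> set L - {?w} \<or> u = ?c0 \<or> u = ?c1" and vc: "v \<in> set L - {?w} \<or> v = ?c0 \<or> v = ?c1"
      using u v S by auto
    show ?thesis
    proof (cases "u \<in> set L - {?w}")
      case uin: True
      show ?thesis
      proof (cases "v \<in> set L - {?w}")
        case True then show ?thesis using uin base[of u v] uv by auto
      next
        case False
        then have "v = ?c0 \<or> v = ?c1" using vc by auto
        moreover have "\<exists>p j b xs ys. u = p @ (j,b) # xs \<and> ?w = p @ (j,\<not>b) # ys"
          using uin w base[of u ?w] by auto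
        ultimately show ?thesis using ext2[of u ?w "[(length L, False)]"] ext2[of u ?w "[(length L, True)]"]
          by auto
      qed
    next
      case unot: False
      then have u01: "u = ?c0 \<or> u = ?c1" using uc by auto
      show ?thesis
      proof (cases "v \<in> set L - {?w}")
        case True
        have "\<exists>p j b xs ys. ?w = p @ (j,b) # xs \<and> v = p @ (j,\<not>b) # ys"
          using True w base[of ?w v] by auto
        then show ?thesis using u01 ext[of ?w v "[(length L, False)]"] ext[of ?w v "[(length L, True)]"]
          by auto
      next
        case False
        then have "v = ?c0 \<or> v = ?c1" using vc by auto
        then show ?thesis using u01 uv c01 c10 by auto
      qed
    qed
  qed
  show ?thesis unfolding inv_tips_def using dist pairs by blast
qed

lemma yule_tips_inv:
  "L \<in> set_pmf (yule_tips m) \<Longrightarrow> inv_tips L \<and> length L = max 1 m"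
proof (induction m arbitrary: L rule: yule_tips.induct)
  case 1 then show ?case by (simp add: inv_tips_def)
next
  case 2 then show ?case by (simp add: inv_tips_def)
next
  case (3 m)
  from 3(2) obtain L0 i where L0: "L0 \<in> set_pmf (yule_tips (Suc m))"
     "i \<in> set_pmf (pmf_of_set {..<length L0})" "L = split_lineage L0 i"
    by auto
  with 3(1) have I: "inv_tips L0" "length L0 = Suc m" by auto
  then have "i < length L0" using L0(2) by (subst (asm) set_pmf_of_set) auto
  with I L0 show ?case using inv_split split_length by auto
qed

lemma yule_tips_finite: "finite (set_pmf (yule_tips m))"
proof (induction m rule: yule_tips.induct)
  case (3 m)
  have "\<And>x. x \<in> set_pmf (yule_tips (Suc m)) \<Longrightarrow> length x = Suc m"
    using yule_tips_inv by fastforce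
  then have "\<And>x. x \<in> set_pmf (yule_tips (Suc m)) \<Longrightarrow> set_pmf (pmf_of_set {..<length x}) = {..<Suc m}"
    by (subst set_pmf_of_set) auto
  then show ?case using 3 by auto
qed auto

lemma sum_split_abstract:
  fixes F :: "'a \<Rightarrow> 'a \<Rightarrow> real"
  assumes fin: "finite S0" and nin: "w \<notin> S0" "c0 \<notin> S0" "c1 \<notin> S0" and cc: "c0 \<noteq> c1"
    and diag: "\<And>x. F x x = 0"
    and sub: "\<And>v. v \<in> S0 \<Longrightarrow> F c0 v = F w v \<and> F c1 v = F w v \<and> F v c0 = F w v \<and> F v c1 = F w v \<and> F v w = F w v"
  shows "(\<Sum>u\<in>insert c0 (insert c1 S0). \<Sum>v\<in>insert c0 (insert c1 S0). F u v)
       = (\<Sum>u\<in>insert w S0. \<Sum>v\<in>insert w S0. F u v) + 2 * (\<Sum>v\<in>S0. F w v) + F c0 c1 + F c1 c0"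
proof -
  have a: "(\<Sum>v\<in>S0. F c0 v) = (\<Sum>v\<in>S0. F w v)" "(\<Sum>v\<in>S0. F c1 v) = (\<Sum>v\<in>S0. F w v)"
    using sub by (auto intro!: sum.cong)
  have b: "(\<Sum>u\<in>S0. F u c0 + (F u c1 + (\<Sum>v\<in>S0. F u v))) = 2 * (\<Sum>v\<in>S0. F w v) + (\<Sum>u\<in>S0. \<Sum>v\<in>S0. F u v)"
    using sub by (simp add: sum.distrib sum_distrib_left)
  have c: "(\<Sum>u\<in>S0. F u w + (\<Sum>v\<in>S0. F u v)) = (\<Sum>v\<in>S0. F w v) + (\<Sum>u\<in>S0. \<Sum>v\<in>S0. F u v)"
    using sub by (simp add: sum.distrib)
  show ?thesis using fin nin cc
    by (simp add: sum.insert diag a b c)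
qed

definition FF :: "nat \<Rightarrow> lineage \<Rightarrow> lineage \<Rightarrow> real" where
  "FF k u v = (if u \<noteq> v \<and> split_idx u v = k then 1 else 0)"

definition cntS :: "nat \<Rightarrow> lineage set \<Rightarrow> real" where
  "cntS k S = (\<Sum>u\<in>S. \<Sum>v\<in>S. FF k u v)"

definition dS :: "nat \<Rightarrow> lineage set \<Rightarrow> lineage \<Rightarrow> real" where
  "dS k S w = (\<Sum>v\<in>S. FF k w v)"

lemma cnt_split:
  assumes "inv_tips L" "i < length L"
  shows "cntS k (set (split_lineage L i)) = cntS k (set L) + 2 * dS k (set L) (L!i)
           + 2 * (if k = length L then 1 else 0)"
proof -
  let ?w = "L!i"
  let ?c0 = "?w @ [(length L, False)]" and ?c1 = "?w @ [(length L, True)]"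
  let ?S0 = "set L - {?w}"
  have d: "distinct L" using assms unfolding inv_tips_def by auto
  have w: "?w \<in> set L" using assms by simp
  have cnot: "?c0 \<notin> ?S0" "?c1 \<notin> ?S0"
  proof -
    { fix c s v assume c: "c = ?w @ s" "v \<in> set L" "v \<noteq> ?w" "c = v"
      obtain p j b xs ys where "?w = p @ (j,b) # xs" "v = p @ (j,\<not>b) # ys"
        using assms(1) w c unfolding inv_tips_def by blast
      with c have False by auto }
    then show "?c0 \<notin> ?S0" "?c1 \<notin> ?S0" by blast+
  qed
  have S: "set (split_lineage L i) = insert ?c0 (insert ?c1 ?S0)"
    using split_set[OF assms(2) d] by auto
  have SL: "set L = insert ?w ?S0" using w by auto
  have sub: "FF k ?c0 v = FF k ?w v \<and> FF k ?c1 v = FF k ?w v \<and> FF k v ?c0 = FF k ?w v \<and> FF k v ?c1 = FF k ?w v \<and> FF k v ?w = FF k ?w v"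
    if v: "v \<in> ?S0" for v
  proof -
    have vL: "v \<in> set L" "v \<noteq> ?w" using v by auto
    have ne: "?c0 \<noteq> v" "?c1 \<noteq> v" using cnot v by auto
    show ?thesis unfolding FF_def
      using inv_ext[OF assms(1) w vL(1) vL(2)[symmetric]] inv_sym[OF assms(1) w vL(1) vL(2)[symmetric]] ne vL(2)
      by auto
  qed
  have e0: "FF k ?c0 ?c1 = (if k = length L then 1 else 0)" "FF k ?c1 ?c0 = (if k = length L then 1 else 0)"
    unfolding FF_def using sidx_div[of False True ?w "length L" "[]" "[]"] sidx_div[of True False ?w "length L" "[]" "[]"]
    by auto
  have "cntS k (set (split_lineage L i)) = (\<Sum>u\<in>insert ?w ?S0. \<Sum>v\<in>insert ?w ?S0. FF k u v) + 2 * (\<Sum>v\<in>?S0. FF k ?w v) + FF k ?c0 ?c1 + FF k ?c1 ?c0"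
    unfolding cntS_def S
    by (rule sum_split_abstract) (use cnot sub in \<open>auto simp: FF_def\<close>)
  moreover have "(\<Sum>v\<in>?S0. FF k ?w v) = dS k (set L) ?w"
    unfolding dS_def using sum.remove[OF finite_set w, of "FF k ?w"] by (simp add: FF_def)
  ultimately show ?thesis using SL e0 unfolding cntS_def by simp
qed

lemma sum_nth_set:
  assumes "distinct L"
  shows "(\<Sum>i<length L. g (L!i)) = (\<Sum>x\<in>set L. g x)"
proof -
  have "set L = (\<lambda>i. L!i) ` {..<length L}" by (auto simp: in_set_conv_nth)
  moreover have "inj_on (\<lambda>i. L!i) {..<length L}" using assms by (simp add: inj_on_def nth_eq_iff_index_eq)
  ultimately show ?thesis by (simp add: sum.reindex)
qed

lemma sum_dS: "(\<Sum>w\<in>S. dS k S w) = cntS k S"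
  unfolding dS_def cntS_def ..

lemma integral_bind_pmf_fin:
  fixes f :: "'b \<Rightarrow> real"
  assumes fin: "finite (set_pmf (bind_pmf p q))"
  shows "measure_pmf.expectation (bind_pmf p q) f = measure_pmf.expectation p (\<lambda>x. measure_pmf.expectation (q x) f)"
proof -
  define B where "B = set_pmf (bind_pmf p q)"
  define g where "g y = f y * indicator B y" for y
  have fin: "finite B" using fin B_def by simp
  have bnd: "\<bar>g y\<bar> \<le> (\<Sum>z\<in>B. \<bar>f z\<bar>)" for y
  proof (cases "y \<in> B")
    case True
    then show ?thesis unfolding g_def using fin by (auto intro!: member_le_sum)
  next
    case False then show ?thesis unfolding g_def by (auto intro!: sum_nonneg)
  qed
  have "measure_pmf.expectation (bind_pmf p q) f = measure_pmf.expectation (bind_pmf p q) g"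
    by (intro integral_cong_AE) (auto simp: AE_measure_pmf_iff g_def B_def)
  also have "\<dots> = integral\<^sup>L (measure_pmf p \<bind> (\<lambda>x. measure_pmf (q x))) g"
    by (simp add: measure_pmf_bind)
  also have "\<dots> = (\<integral>x. integral\<^sup>L (measure_pmf (q x)) g \<partial>measure_pmf p)"
    by (rule integral_bind[where K="count_space UNIV" and B="\<Sum>z\<in>B. \<bar>f z\<bar>" and B'=1])
       (auto simp: bnd[simplified] measure_pmf_in_subprob_algebra measure_pmf.emeasure_space_1
             intro: measure_pmf.finite_measure_axioms)
  also have "\<dots> = measure_pmf.expectation p (\<lambda>x. measure_pmf.expectation (q x) f)"
    by (intro integral_cong_AE) (auto simp: AE_measure_pmf_iff g_def B_def split: split_indicator intro!: integral_cong_AE)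
  finally show ?thesis .
qed

definition ecnt :: "nat \<Rightarrow> nat \<Rightarrow> real" where
  "ecnt k m = measure_pmf.expectation (yule_tips m) (\<lambda>L. cntS k (set L))"

lemma ecnt_1: "ecnt k (Suc 0) = 0"
  by (simp add: ecnt_def cntS_def FF_def)

lemma ecnt_Suc:
  assumes "m \<ge> 1"
  shows "ecnt k (Suc m) = ecnt k m * (real m + 2) / real m + 2 * (if k = m then 1 else 0)"
proof -
  obtain m' where m: "m = Suc m'" using assms by (cases m) auto
  have inner: "measure_pmf.expectation (map_pmf (split_lineage L) (pmf_of_set {..<length L})) (\<lambda>L. cntS k (set L))
      = cntS k (set L) * (real m + 2) / real m + 2 * (if k = m then 1 else 0)"
    if L: "L \<in> set_pmf (yule_tips m)" for L
  proof -
    have I: "inv_tips L" "length L = m" using yule_tips_inv[OF L] m by auto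
    have d: "distinct L" using I unfolding inv_tips_def by simp
    have "measure_pmf.expectation (map_pmf (split_lineage L) (pmf_of_set {..<length L})) (\<lambda>L. cntS k (set L))
        = measure_pmf.expectation (pmf_of_set {..<m}) (\<lambda>i. cntS k (set (split_lineage L i)))"
      using I by simp
    also have "\<dots> = (\<Sum>i<m. cntS k (set (split_lineage L i))) / real m"
      using m by (subst integral_pmf_of_set) auto
    also have "(\<Sum>i<m. cntS k (set (split_lineage L i))) =
        (\<Sum>i<m. cntS k (set L) + 2 * dS k (set L) (L!i) + 2 * (if k = m then 1 else 0))"
      using I cnt_split by (intro sum.cong) auto
    also have "\<dots> = real m * cntS k (set L) + 2 * (\<Sum>i<m. dS k (set L) (L!i)) + 2 * real m * (if k = m then 1 else 0)"
      by (simp add: sum.distrib sum_distrib_left)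
    also have "(\<Sum>i<m. dS k (set L) (L!i)) = cntS k (set L)"
      using sum_nth_set[OF d, of "dS k (set L)"] I sum_dS by simp
    finally show ?thesis using m by (simp add: field_simps)
  qed
  have fin: "finite (set_pmf (yule_tips (Suc m)))" by (rule yule_tips_finite)
  have "ecnt k (Suc m) = measure_pmf.expectation (yule_tips m)
      (\<lambda>L. measure_pmf.expectation (map_pmf (split_lineage L) (pmf_of_set {..<length L})) (\<lambda>L. cntS k (set L)))"
    unfolding ecnt_def m yule_tips.simps(3) by (rule integral_bind_pmf_fin) (use fin m in simp)
  also have "\<dots> = measure_pmf.expectation (yule_tips m)
      (\<lambda>L. cntS k (set L) * (real m + 2) / real m + 2 * (if k = m then 1 else 0))"
    by (intro integral_cong_AE) (auto simp: AE_measure_pmf_iff inner simp del: integral_map_pmf)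
  also have "\<dots> = ecnt k m * (real m + 2) / real m + 2 * (if k = m then 1 else 0)"
    unfolding ecnt_def using yule_tips_finite[of m]
    by (simp add: integrable_measure_pmf_finite)
  finally show ?thesis .
qed

lemma aux_alg: "(m::real) > 0 \<Longrightarrow> D > 0 \<Longrightarrow> 2*m*(m+1)/D*(m+2)/m = 2*(m+1)*(m+1+1)/D"
  by (simp add: field_simps)

lemma ecnt_closed:
  assumes "m \<ge> 1"
  shows "ecnt k m = (if 1 \<le> k \<and> k < m then 2 * real m * (real m + 1) / ((real k + 1) * (real k + 2)) else 0)"
  using assms
proof (induction m rule: dec_induct)
  case base then show ?case by (simp add: ecnt_1)
next
  case (step m)
  have m0: "real m > 0" using step by simp
  consider "k = 0" | "k \<ge> 1 \<and> k < m" | "k = m" | "k > m" by linarith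
  then show ?case
  proof cases
    case 2
    have D: "(real k + 1) * (real k + 2) > 0" by simp
    have "ecnt k (Suc m) = 2 * real m * (real m + 1) / ((real k + 1) * (real k + 2)) * (real m + 2) / real m"
      using step 2 by (subst ecnt_Suc) auto
    also have "\<dots> = 2 * real (Suc m) * (real (Suc m) + 1) / ((real k + 1) * (real k + 2))"
      using aux_alg[OF m0 D] by simp
    finally show ?thesis using 2 by simp
  next
    case 3
    have "ecnt k (Suc m) = 2" using step 3 by (subst ecnt_Suc) auto
    moreover have "2 * real (Suc m) * (real (Suc m) + 1) / ((real k + 1) * (real k + 2)) = 2"
    proof -
      have p: "(real m + 1) * (real m + 2) > 0" by simp
      have "2 * real (Suc m) * (real (Suc m) + 1) = 2 * ((real m + 1) * (real m + 2))" by (simp add: algebra_simps)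
      then show ?thesis using 3 p by simp
    qed
    ultimately show ?thesis using 3 step by simp
  qed (use step in \<open>auto simp: ecnt_Suc\<close>)
qed

definition PP :: "nat \<Rightarrow> (nat \<times> nat) set" where
  "PP n = {(a, b). a < b \<and> b < n}"

lemma PP_Suc: "PP (Suc n) = PP n \<union> (\<lambda>a. (a, n)) ` {..<n}"
  unfolding PP_def by auto

lemma PP_finite: "finite (PP n)"
  unfolding PP_def by (rule finite_subset[of _ "{..<n} \<times> {..<n}"]) auto

lemma sum_PP: "(\<Sum>x\<in>PP n. G (fst x) (snd x)) = (\<Sum>b<n. \<Sum>a<b. G a b)"
proof (induction n)
  case 0 then show ?case by (simp add: PP_def)
next
  case (Suc n)
  have disj: "PP n \<inter> (\<lambda>a. (a, n)) ` {..<n} = {}" unfolding PP_def by auto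
  have inj: "inj_on (\<lambda>a. (a, n)) {..<n}" by (auto simp: inj_on_def)
  show ?case unfolding PP_Suc
    by (subst sum.union_disjoint) (use disj PP_finite inj Suc in \<open>auto simp: sum.reindex\<close>)
qed

lemma sym_pairs:
  fixes G :: "nat \<Rightarrow> nat \<Rightarrow> real"
  assumes "\<And>a b. a < n \<Longrightarrow> b < n \<Longrightarrow> a \<noteq> b \<Longrightarrow> G a b = G b a"
  shows "(\<Sum>a<n. \<Sum>b<n. if a \<noteq> b then G a b else 0) = 2 * (\<Sum>b<n. \<Sum>a<b. G a b)"
  using assms
proof (induction n)
  case 0 then show ?case by simp
next
  case (Suc n)
  have IH: "(\<Sum>a<n. \<Sum>b<n. if a \<noteq> b then G a b else 0) = 2 * (\<Sum>b<n. \<Sum>a<b. G a b)"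
    using Suc by auto
  have s1: "(\<Sum>a<n. if a \<noteq> n then G a n else 0) = (\<Sum>a<n. G a n)" by (intro sum.cong) auto
  have s2: "(\<Sum>b<n. if n \<noteq> b then G n b else 0) = (\<Sum>a<n. G a n)" using Suc.prems by (intro sum.cong) auto
  have "(\<Sum>a<Suc n. \<Sum>b<Suc n. if a \<noteq> b then G a b else 0)
     = (\<Sum>a<n. \<Sum>b<n. if a \<noteq> b then G a b else 0) + (\<Sum>a<n. if a \<noteq> n then G a n else 0)
       + (\<Sum>b<n. if n \<noteq> b then G n b else 0)"
    by (simp add: sum.distrib)
  also have "\<dots> = 2 * (\<Sum>b<Suc n. \<Sum>a<b. G a b)" using IH s1 s2 by simp
  finally show ?case .
qed

lemma cnt_index:
  assumes "inv_tips L" "length L = n"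
  shows "cntS k (set L) = 2 * (\<Sum>x\<in>PP n. if split_idx (L ! fst x) (L ! snd x) = k then 1 else 0)"
proof -
  have d: "distinct L" using assms unfolding inv_tips_def by simp
  have "cntS k (set L) = (\<Sum>a<n. \<Sum>b<n. FF k (L!a) (L!b))"
    unfolding cntS_def using assms(2) by (simp add: sum_nth_set[OF d, symmetric])
  also have "\<dots> = (\<Sum>a<n. \<Sum>b<n. if a \<noteq> b then (if split_idx (L!a) (L!b) = k then 1 else 0) else 0)"
    using d assms(2) by (intro sum.cong refl) (auto simp: FF_def nth_eq_iff_index_eq)
  also have "\<dots> = 2 * (\<Sum>b<n. \<Sum>a<b. (if split_idx (L!a) (L!b) = k then 1 else 0))"
    by (rule sym_pairs) (use assms d inv_sym in \<open>auto simp: nth_eq_iff_index_eq\<close>)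
  also have "\<dots> = 2 * (\<Sum>x\<in>PP n. if split_idx (L ! fst x) (L ! snd x) = k then 1 else 0)"
    using sum_PP[of "\<lambda>a b. if split_idx (L!a) (L!b) = k then 1 else (0::real)" n] by simp
  finally show ?thesis .
qed

lemma card_PP: "2 * real (card (PP n)) = real n * (real n - 1)"
proof -
  have "2 * (\<Sum>x\<in>PP n. (1::real)) = (\<Sum>a<n. \<Sum>b<n. if a \<noteq> b then 1 else 0)"
    using sym_pairs[of n "\<lambda>a b. 1"] sum_PP[of "\<lambda>a b. (1::real)" n] by simp
  also have "\<dots> = (\<Sum>a<n. real n - 1)"
  proof (intro sum.cong refl)
    fix a assume "a \<in> {..<n}"
    then have "(\<Sum>b<n. if a \<noteq> b then (1::real) else 0) = real (card ({..<n} \<inter> {b. a \<noteq> b}))"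
      by (simp add: sum.If_cases)
    also have "{..<n} \<inter> {b. a \<noteq> b} = {..<n} - {a}" by auto
    finally show "(\<Sum>b<n. if a \<noteq> b then (1::real) else 0) = real n - 1" using \<open>a \<in> {..<n}\<close>
      by simp
  qed
  finally show ?thesis by simp
qed

lemma aux_alg2: "(n::real) > 0 \<Longrightarrow> n - 1 > 0 \<Longrightarrow> a > 0 \<Longrightarrow> b > 0 \<Longrightarrow>
   (2*n*(n+1)/(a*b))/(n*(n-1)) = 2*(n+1)/((n-1)*a*b)"
  by (simp add: field_simps)

lemma kappa_pmf_eq:
  assumes "n \<ge> 2"
  shows "pmf (kappa_pmf n) k = (if 1 \<le> k \<and> k < n then 2 * (real n + 1) / ((real n - 1) * (real k + 1) * (real k + 2)) else 0)"
proof -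
  have "(0, 1) \<in> PP n" unfolding PP_def using assms by auto
  then have PPne: "PP n \<noteq> {}" by auto
  have cP: "real (card (PP n)) = real n * (real n - 1) / 2" using card_PP[of n] by simp
  have inner: "pmf (map_pmf (\<lambda>(a, b). split_idx (L ! a) (L ! b)) (pmf_of_set {(a, b). a < b \<and> b < n})) k
       = cntS k (set L) / (real n * (real n - 1))"
    if L: "L \<in> set_pmf (yule_tips n)" for L
  proof -
    have I: "inv_tips L" "length L = n" using yule_tips_inv[OF L] assms by auto
    have "pmf (map_pmf (\<lambda>(a, b). split_idx (L ! a) (L ! b)) (pmf_of_set (PP n))) k
        = real (card (PP n \<inter> ((\<lambda>(a, b). split_idx (L ! a) (L ! b)) -` {k}))) / real (card (PP n))"
      using PPne PP_finite by (simp add: pmf_map measure_pmf_of_set)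
    also have "real (card (PP n \<inter> ((\<lambda>(a, b). split_idx (L ! a) (L ! b)) -` {k})))
        = (\<Sum>x\<in>PP n. if split_idx (L ! fst x) (L ! snd x) = k then 1 else 0)"
    proof -
      have "PP n \<inter> ((\<lambda>(a, b). split_idx (L ! a) (L ! b)) -` {k}) = PP n \<inter> {x. split_idx (L ! fst x) (L ! snd x) = k}"
        by auto
      then show ?thesis using PP_finite by (simp add: sum.If_cases)
    qed
    also have "\<dots> = cntS k (set L) / 2" using cnt_index[OF I] by simp
    finally show ?thesis using cP unfolding PP_def by simp
  qed
  have "pmf (kappa_pmf n) k = measure_pmf.expectation (yule_tips n) (\<lambda>L. cntS k (set L) / (real n * (real n - 1)))"
    unfolding kappa_pmf_def pmf_bind
    by (intro integral_cong_AE) (auto simp: AE_measure_pmf_iff inner)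
  also have "\<dots> = ecnt k n / (real n * (real n - 1))"
    unfolding ecnt_def by simp
  also have "\<dots> = (if 1 \<le> k \<and> k < n then 2 * (real n + 1) / ((real n - 1) * (real k + 1) * (real k + 2)) else 0)"
  proof (cases "1 \<le> k \<and> k < n")
    case True
    have n1: "real n - 1 > 0" "real n > 0" using assms by auto
    have "ecnt k n = 2 * real n * (real n + 1) / ((real k + 1) * (real k + 2))"
      using True assms by (simp add: ecnt_closed)
    then show ?thesis using True aux_alg2[OF n1(2) n1(1), of "real k + 1" "real k + 2"] by simp
  next
    case False
    then show ?thesis using assms by (simp add: ecnt_closed)
  qed
  finally show ?thesis .
qed




lemma exp_mom:
  assumes l: "(0::real) < l"
  shows "has_bochner_integral (density lborel (exponential_density l)) (\<lambda>x. x ^ i) (fact i / l ^ i)"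
proof -
  interpret prob_space "density lborel (exponential_density l)"
    using prob_space_exponential_density[OF l] .
  have "distributed (density lborel (exponential_density l)) lborel (\<lambda>x. x) (exponential_density l)"
    unfolding distributed_def by (auto simp: distr_id2)
  from has_bochner_integral_erlang_ith_moment[OF l this, of i] show ?thesis by simp
qed

abbreviation EM :: "nat \<Rightarrow> real measure" where
  "EM i \<equiv> density lborel (exponential_density (real i))"

lemma EM_sigma: "sigma_finite_measure (EM i)"
  by (subst sigma_finite_measure.sigma_finite_iff_density_finite[OF sigma_finite_lborel]) auto

interpretation EMP: product_sigma_finite EM
  unfolding product_sigma_finite_def using EM_sigma by auto

lemma EM_prob: "i > 0 \<Longrightarrow> prob_space (EM i)"
  by (rule prob_space_exponential_density) simp

lemma EM_int1: "i > 0 \<Longrightarrow> integrable (EM i) (\<lambda>x. 1::real)"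
proof -
  assume "i > 0"
  then interpret prob_space "EM i" by (rule EM_prob)
  show ?thesis by simp
qed

lemma EM_mom1: "i > 0 \<Longrightarrow> has_bochner_integral (EM i) (\<lambda>x. x) (1 / real i)"
  using exp_mom[of "real i" 1] by simp

lemma EM_mom2: "i > 0 \<Longrightarrow> has_bochner_integral (EM i) (\<lambda>x. x^2) (2 / real i ^ 2)"
  using exp_mom[of "real i" 2] by (simp add: numeral_2_eq_2)

lemma EM_meas: "i > 0 \<Longrightarrow> measure (EM i) UNIV = 1"
proof -
  assume "i > 0"
  then interpret prob_space "EM i" by (rule EM_prob)
  show ?thesis using prob_space by simp
qed

lemma EM_one: "i > 0 \<Longrightarrow> integral\<^sup>L (EM i) (\<lambda>x. 1::real) = 1"
proof -
  assume i: "i > 0"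
  have "integral\<^sup>L (EM i) (\<lambda>x. 1::real) = measure (EM i) (space (EM i)) *\<^sub>R 1"
    by (rule lebesgue_integral_const)
  then show ?thesis using EM_meas[OF i] by simp
qed

definition PM :: "nat \<Rightarrow> (nat \<Rightarrow> real) measure" where
  "PM n = (\<Pi>\<^sub>M i\<in>{1..n}. EM i)"

lemma PM_prob: "prob_space (PM n)"
  unfolding PM_def by (rule prob_space_PiM) (auto intro: EM_prob)

lemma PM_T1:
  assumes i: "i \<in> {1..n}"
  shows "integrable (PM n) (\<lambda>x. x i) \<and> integral\<^sup>L (PM n) (\<lambda>x. x i) = 1 / real i"
proof -
  define f where "f l y = (if l = i then y else 1)" for l and y :: real
  have int: "integrable (EM l) (f l)" if "l \<in> {1..n}" for l
    using that EM_int1[of l] EM_mom1[of l] unfolding f_def by (cases "l = i") (auto simp: integrable.intros)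
  have eq: "(\<lambda>x. (\<Prod>l\<in>{1..n}. f l (x l))) = (\<lambda>x. x i)"
    using i unfolding f_def by (auto simp: prod.delta')
  have ints: "integral\<^sup>L (EM l) (f l) = (if l = i then 1 / real i else 1)" if "l \<in> {1..n}" for l
    using that EM_one[of l] EM_meas[of l] EM_mom1[of l] unfolding f_def by (auto simp: has_bochner_integral_integral_eq)
  have "integrable (PM n) (\<lambda>x. x i)"
    unfolding PM_def using EMP.product_integrable_prod[of "{1..n}" f] int eq by simp
  moreover have "integral\<^sup>L (PM n) (\<lambda>x. x i) = (\<Prod>l\<in>{1..n}. integral\<^sup>L (EM l) (f l))"
    unfolding PM_def using EMP.product_integral_prod[of "{1..n}" f] int eq by simp
  moreover have "\<dots> = 1 / real i" using i by (simp add: ints prod.delta')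
  ultimately show ?thesis by simp
qed

lemma PM_T2:
  assumes i: "i \<in> {1..n}" and j: "j \<in> {1..n}"
  shows "integrable (PM n) (\<lambda>x. x i * x j) \<and>
    integral\<^sup>L (PM n) (\<lambda>x. x i * x j) = 1 / (real i * real j) + (if i = j then 1 / real i ^ 2 else 0)"
proof (cases "i = j")
  case True
  define f where "f l y = (if l = i then y^2 else 1)" for l and y :: real
  have int: "integrable (EM l) (f l)" if "l \<in> {1..n}" for l
    using that EM_int1[of l] EM_mom2[of l] unfolding f_def by (cases "l = i") (auto simp: integrable.intros)
  have eq: "(\<lambda>x. (\<Prod>l\<in>{1..n}. f l (x l))) = (\<lambda>x. x i * x j)"
    using i True unfolding f_def by (auto simp: prod.delta' power2_eq_square)
  have ints: "integral\<^sup>L (EM l) (f l) = (if l = i then 2 / real i ^ 2 else 1)" if "l \<in> {1..n}" for l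
    using that EM_one[of l] EM_meas[of l] EM_mom2[of l] unfolding f_def by (auto simp: has_bochner_integral_integral_eq)
  have "integrable (PM n) (\<lambda>x. x i * x j)"
    unfolding PM_def using EMP.product_integrable_prod[of "{1..n}" f] int eq by simp
  moreover have "integral\<^sup>L (PM n) (\<lambda>x. x i * x j) = (\<Prod>l\<in>{1..n}. integral\<^sup>L (EM l) (f l))"
    unfolding PM_def using EMP.product_integral_prod[of "{1..n}" f] int eq by simp
  moreover have "\<dots> = 2 / real i ^ 2" using i by (simp add: ints prod.delta')
  ultimately show ?thesis using True by (simp add: power2_eq_square)
next
  case False
  define f where "f l y = (if l = i then y else 1) * (if l = j then y else 1)" for l and y :: real
  have fe: "f l = (if l = i then (\<lambda>y. y) else if l = j then (\<lambda>y. y) else (\<lambda>y. 1))" for l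
    using False unfolding f_def by auto
  have int: "integrable (EM l) (f l)" if "l \<in> {1..n}" for l
    using that EM_int1[of l] EM_mom1[of l] unfolding fe by (auto simp: integrable.intros)
  have eq: "(\<lambda>x. (\<Prod>l\<in>{1..n}. f l (x l))) = (\<lambda>x. x i * x j)"
    using i j unfolding f_def by (auto simp: prod.delta' prod.distrib)
  have ints: "integral\<^sup>L (EM l) (f l) = (if l = i then 1 / real i else 1) * (if l = j then 1 / real j else 1)" if "l \<in> {1..n}" for l
    using that EM_one[of l] EM_meas[of l] EM_mom1[of l] False unfolding fe by (auto simp: has_bochner_integral_integral_eq)
  have "integrable (PM n) (\<lambda>x. x i * x j)"
    unfolding PM_def using EMP.product_integrable_prod[of "{1..n}" f] int eq by simp
  moreover have "integral\<^sup>L (PM n) (\<lambda>x. x i * x j) = (\<Prod>l\<in>{1..n}. integral\<^sup>L (EM l) (f l))"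
    unfolding PM_def using EMP.product_integral_prod[of "{1..n}" f] int eq by simp
  moreover have "\<dots> = 1 / (real i * real j)" using i j by (simp add: ints prod.delta' prod.distrib)
  ultimately show ?thesis using False by simp
qed

lemma PM_sum1:
  assumes A: "A \<subseteq> {1..n}"
  shows "integrable (PM n) (\<lambda>x. \<Sum>i\<in>A. x i) \<and> integral\<^sup>L (PM n) (\<lambda>x. \<Sum>i\<in>A. x i) = (\<Sum>i\<in>A. 1 / real i)"
proof -
  have fA: "finite A" using A finite_subset by blast
  have "integrable (PM n) (\<lambda>x. x i)" "integral\<^sup>L (PM n) (\<lambda>x. x i) = 1 / real i" if "i \<in> A" for i
    using PM_T1[of i n] A that by auto
  then show ?thesis by (auto simp: integral_sum)
qed

lemma PM_sum2:
  assumes A: "A \<subseteq> {1..n}"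
  shows "integrable (PM n) (\<lambda>x. (\<Sum>i\<in>A. x i)^2) \<and>
    integral\<^sup>L (PM n) (\<lambda>x. (\<Sum>i\<in>A. x i)^2) = (\<Sum>i\<in>A. 1 / real i)^2 + (\<Sum>i\<in>A. 1 / real i ^ 2)"
proof -
  have fA: "finite A" using A finite_subset by blast
  have sq: "(\<lambda>x::nat\<Rightarrow>real. (\<Sum>i\<in>A. x i)^2) = (\<lambda>x. \<Sum>i\<in>A. \<Sum>j\<in>A. x i * x j)"
  proof (rule ext)
    fix x :: "nat \<Rightarrow> real"
    have "(\<Sum>i\<in>A. x i)^2 = (\<Sum>i\<in>A. x i) * (\<Sum>j\<in>A. x j)" by (simp add: power2_eq_square)
    also have "\<dots> = (\<Sum>i\<in>A. \<Sum>j\<in>A. x i * x j)" by (rule sum_product)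
    finally show "(\<Sum>i\<in>A. x i)^2 = (\<Sum>i\<in>A. \<Sum>j\<in>A. x i * x j)" .
  qed
  have I: "integrable (PM n) (\<lambda>x. x i * x j)"
     "integral\<^sup>L (PM n) (\<lambda>x. x i * x j) = 1 / (real i * real j) + (if i = j then 1 / real i ^ 2 else 0)"
    if "i \<in> A" "j \<in> A" for i j
    using PM_T2[of i n j] A that by (auto simp del: atLeastAtMost_iff) (auto simp: subset_iff)
  have int: "integrable (PM n) (\<lambda>x. \<Sum>i\<in>A. \<Sum>j\<in>A. x i * x j)"
    using I by auto
  have "integral\<^sup>L (PM n) (\<lambda>x. \<Sum>i\<in>A. \<Sum>j\<in>A. x i * x j)
      = (\<Sum>i\<in>A. \<Sum>j\<in>A. 1 / (real i * real j) + (if i = j then 1 / real i ^ 2 else 0))"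
    using I by (simp add: integral_sum)
  also have "\<dots> = (\<Sum>i\<in>A. 1 / real i)^2 + (\<Sum>i\<in>A. 1 / real i ^ 2)"
    using fA by (simp add: sum.distrib power2_eq_square sum_product)
  finally show ?thesis using int sq by simp
qed




lemma H_Suc: "H (Suc n) r = H n r + 1 / real (Suc n) ^ r"
  unfolding H_def by simp

lemma alg0: fixes n a b :: real assumes a: "a = n + 1" and b: "b = n + 2" and n: "n \<ge> 1"
  shows "(n - 1) / (2 * a) + 1 / (a * b) = (n + 1 - 1) / (2 * b)"
proof -
  have a0: "a \<noteq> 0" "b \<noteq> 0" using a b n by auto
  show ?thesis using a0 by (simp add: field_simps) (simp add: a b algebra_simps)
qed

lemma W_sum: "n \<ge> 1 \<Longrightarrow> (\<Sum>k\<in>{1..<n}. 1 / ((real k + 1) * (real k + 2))) = (real n - 1) / (2 * (real n + 1))"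
proof (induction n rule: dec_induct)
  case base then show ?case by simp
next
  case (step n)
  have "(\<Sum>k\<in>{1..<Suc n}. 1 / ((real k + 1) * (real k + 2))) = (real n - 1) / (2 * (real n + 1)) + 1 / ((real n + 1) * (real n + 2))"
    using step by (simp add: sum.atLeastLessThan_Suc)
  also have "\<dots> = (real n + 1 - 1) / (2 * (real n + 2))"
    by (rule alg0) (use step in auto)
  finally show ?case by (simp add: add_ac)
qed

lemma alg1: fixes n h a b :: real assumes a: "a = n + 1" and b: "b = n + 2" and n: "n \<ge> 1"
  shows "(n - h) / a + h / (a * b) = (n + 1 - (h + 1 / a)) / b"
proof -
  have a0: "a \<noteq> 0" "b \<noteq> 0" using a b n by auto
  show ?thesis using a0 by (simp add: field_simps) (simp add: a b algebra_simps)
qed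

lemma A1_sum: "n \<ge> 1 \<Longrightarrow> (\<Sum>k\<in>{1..<n}. H k 1 / ((real k + 1) * (real k + 2))) = (real n - H n 1) / (real n + 1)"
proof (induction n rule: dec_induct)
  case base then show ?case by (simp add: H_def)
next
  case (step n)
  have "(\<Sum>k\<in>{1..<Suc n}. H k 1 / ((real k + 1) * (real k + 2))) = (real n - H n 1) / (real n + 1) + H n 1 / ((real n + 1) * (real n + 2))"
    using step by (simp add: sum.atLeastLessThan_Suc)
  also have "\<dots> = (real n + 1 - (H n 1 + 1 / (real n + 1))) / (real n + 2)"
    by (rule alg1) (use step in auto)
  finally show ?case by (simp add: H_Suc add_ac)
qed

lemma alg2: fixes n g a b :: real assumes a: "a = n + 1" and b: "b = n + 2" and n: "n \<ge> 1"
  shows "n * (g - 1) / a + g / (a * b) = (n + 1) * (g + 1 / a^2 - 1) / b"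
proof -
  have a0: "a \<noteq> 0" "b \<noteq> 0" using a b n by auto
  show ?thesis using a0 by (simp add: field_simps power2_eq_square) (simp add: a b algebra_simps)
qed

lemma A2_sum: "n \<ge> 1 \<Longrightarrow> (\<Sum>k\<in>{1..<n}. H k 2 / ((real k + 1) * (real k + 2))) = real n * (H n 2 - 1) / (real n + 1)"
proof (induction n rule: dec_induct)
  case base then show ?case by (simp add: H_def)
next
  case (step n)
  have "(\<Sum>k\<in>{1..<Suc n}. H k 2 / ((real k + 1) * (real k + 2))) = real n * (H n 2 - 1) / (real n + 1) + H n 2 / ((real n + 1) * (real n + 2))"
    using step by (simp add: sum.atLeastLessThan_Suc)
  also have "\<dots> = (real n + 1) * (H n 2 + 1 / (real n + 1)^2 - 1) / (real n + 2)"
    by (rule alg2) (use step in auto)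
  finally show ?case by (simp add: H_Suc add_ac)
qed

definition A3f :: "real \<Rightarrow> real \<Rightarrow> real \<Rightarrow> real" where
  "A3f n h g = 1 + g - 1 / n^2 - (h - 1 / n)^2 / (n + 1) - 2 * h / n + 2 / n^2 - 1 / n"

lemma alg3: fixes n h g a b :: real assumes a: "a = n + 1" and b: "b = n + 2" and n: "n \<ge> 1"
  shows "A3f n h g + h^2 / (a * b) = A3f a (h + 1 / a) (g + 1 / a^2)"
proof -
  have a0: "a \<noteq> 0" "b \<noteq> 0" "n \<noteq> 0" using a b n by auto
  have b': "a + 1 = b" using a b by simp
  have a': "n + 1 = a" using a by simp
  show ?thesis unfolding A3f_def b' a' using a0 by (simp add: field_simps power2_eq_square) (simp add: a b algebra_simps)
qed

lemma A3_sum: "n \<ge> 1 \<Longrightarrow> (\<Sum>k\<in>{1..<n}. (H k 1)^2 / ((real k + 1) * (real k + 2))) = A3f (real n) (H n 1) (H n 2)"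
proof (induction n rule: dec_induct)
  case base then show ?case by (simp add: H_def A3f_def)
next
  case (step n)
  have "(\<Sum>k\<in>{1..<Suc n}. (H k 1)^2 / ((real k + 1) * (real k + 2))) = A3f (real n) (H n 1) (H n 2) + (H n 1)^2 / ((real n + 1) * (real n + 2))"
    using step by (simp add: sum.atLeastLessThan_Suc)
  also have "\<dots> = A3f (real n + 1) (H n 1 + 1 / (real n + 1)) (H n 2 + 1 / (real n + 1)^2)"
    by (rule alg3) (use step in auto)
  finally show ?case by (simp add: H_Suc add_ac)
qed




lemma alg_final:
  fixes n h g :: real
  assumes n: "n > 1"
  shows "2 * (n + 1) / (n - 1) * (h^2 * ((n - 1) / (2 * (n + 1))) - 2 * h * ((n - h) / (n + 1)) + A3f n h g
            + g * ((n - 1) / (2 * (n + 1))) - n * (g - 1) / (n + 1))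
         - (2 * (n + 1) / (n - 1) * (h * ((n - 1) / (2 * (n + 1))) - (n - h) / (n + 1)))^2
       = (n + 1) / (n - 1) * g - 2 * (n + 1) / (n - 1)^2 * h^2 + 4 * (n + 1) / (n - 1)^2 * h
              - 4 / (n - 1) - 4 / (n - 1)^2"
proof -
  define a where "a = n + 1"
  define d where "d = n - 1"
  have a0: "a \<noteq> 0" "d \<noteq> 0" "n \<noteq> 0" using n by (auto simp: a_def d_def)
  have e: "n + 1 = a" "n - 1 = d" by (auto simp: a_def d_def)
  show ?thesis unfolding A3f_def e using a0
    by (simp add: field_simps power2_eq_square) (simp add: a_def d_def algebra_simps)
qed




lemma kappa_set: "n \<ge> 2 \<Longrightarrow> set_pmf (kappa_pmf n) \<subseteq> {1..<n}"
proof
  fix k assume n: "n \<ge> 2" and k: "k \<in> set_pmf (kappa_pmf n)"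
  then have "pmf (kappa_pmf n) k \<noteq> 0" by (simp add: set_pmf_iff)
  then show "k \<in> {1..<n}" using kappa_pmf_eq[OF n, of k] by (auto split: if_splits)
qed

lemma yule_space_eq: "yule_space n = measure_pmf (kappa_pmf n) \<Otimes>\<^sub>M PM n"
  unfolding yule_space_def PM_def ..

lemma slice_eq: "(\<lambda>T. coal_time n (k, T)) = (\<lambda>T. \<Sum>i\<in>{Suc k..n}. T i)"
  unfolding coal_time_def by simp

lemma fubini_pmf:
  fixes f :: "nat \<times> (nat \<Rightarrow> real) \<Rightarrow> real"
  assumes n: "n \<ge> 2"
    and sl: "\<And>k. integrable (PM n) (\<lambda>T. f (k, T))"
  shows "integrable (yule_space n) f \<and>
    integral\<^sup>L (yule_space n) f = (\<Sum>k\<in>{1..<n}. integral\<^sup>L (PM n) (\<lambda>T. f (k, T)) * pmf (kappa_pmf n) k)"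
proof -
  let ?K = "measure_pmf (kappa_pmf n)"
  interpret P: pair_prob_space ?K "PM n"
    by (simp add: pair_prob_space_def pair_sigma_finite_def PM_prob measure_pmf.prob_space_axioms
        prob_space_imp_sigma_finite)
  have fin: "finite (set_pmf (kappa_pmf n))" using kappa_set[OF n] finite_subset by blast
  have rs: "measurable (restrict_space ?K UNIV \<Otimes>\<^sub>M PM n) borel = measurable (?K \<Otimes>\<^sub>M PM n) borel"
    by (intro measurable_cong_sets sets_pair_measure_cong) simp_all
  have meas: "f \<in> borel_measurable (?K \<Otimes>\<^sub>M PM n)"
    using measurable_pair_restrict_pmf1[where A=UNIV and N="PM n" and f=f and L=borel and M="kappa_pmf n"] sl rs
    by (simp add: borel_measurable_integrable)
  have int: "integrable (?K \<Otimes>\<^sub>M PM n) f"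
    by (rule P.Fubini_integrable) (use meas sl fin in \<open>auto intro: integrable_measure_pmf_finite\<close>)
  have "integral\<^sup>L (?K \<Otimes>\<^sub>M PM n) f = (\<integral>k. (\<integral>T. f (k, T) \<partial>PM n) \<partial>?K)"
    using P.integral_fst'[OF int] by simp
  also have "\<dots> = (\<Sum>k\<in>{1..<n}. integral\<^sup>L (PM n) (\<lambda>T. f (k, T)) * pmf (kappa_pmf n) k)"
    by (rule integral_measure_pmf_real) (use kappa_set[OF n] in auto)
  finally show ?thesis using int yule_space_eq by simp
qed

lemma H_split: "k \<le> n \<Longrightarrow> (\<Sum>i\<in>{Suc k..n}. 1 / real i ^ r) = H n r - H k r"
proof (induction n rule: dec_induct)
  case base then show ?case by simp
next
  case (step n)
  then show ?case by (simp add: H_Suc)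
qed

lemma variance_main:
  assumes n: "n \<ge> 2"
  shows "prob_space.variance (yule_space n) (coal_time n) =
              (real n + 1) / (real n - 1) * H n 2
              - 2 * (real n + 1) / (real n - 1)^2 * (H n 1)^2
              + 4 * (real n + 1) / (real n - 1)^2 * H n 1
              - 4 / (real n - 1) - 4 / (real n - 1)^2"
proof -
  let ?K = "measure_pmf (kappa_pmf n)"
  interpret P: pair_prob_space ?K "PM n"
    by (simp add: pair_prob_space_def pair_sigma_finite_def PM_prob measure_pmf.prob_space_axioms
        prob_space_imp_sigma_finite)
  interpret Y: prob_space "yule_space n" unfolding yule_space_eq by (rule P.prob_space_axioms)
  define hs where "hs k = (\<Sum>i\<in>{Suc k..n}. 1 / real i)" for k
  define gs where "gs k = (\<Sum>i\<in>{Suc k..n}. 1 / real i ^ 2)" for k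
  have sub: "{Suc k..n} \<subseteq> {1..n}" for k by auto
  have s1: "integrable (PM n) (\<lambda>T. coal_time n (k, T)) \<and> integral\<^sup>L (PM n) (\<lambda>T. coal_time n (k, T)) = hs k" for k
    unfolding slice_eq hs_def using PM_sum1[OF sub[of k]] by simp
  have s2: "integrable (PM n) (\<lambda>T. (coal_time n (k, T))^2) \<and> integral\<^sup>L (PM n) (\<lambda>T. (coal_time n (k, T))^2) = (hs k)^2 + gs k" for k
    unfolding coal_time_def hs_def gs_def using PM_sum2[OF sub[of k]] by simp
  from fubini_pmf[OF n, of "coal_time n"] s1
  have E1: "integrable (yule_space n) (coal_time n)" "Y.expectation (coal_time n) = (\<Sum>k\<in>{1..<n}. hs k * pmf (kappa_pmf n) k)"
    by auto
  from fubini_pmf[OF n, of "\<lambda>\<omega>. (coal_time n \<omega>)^2"] s2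
  have E2: "integrable (yule_space n) (\<lambda>\<omega>. (coal_time n \<omega>)^2)" "Y.expectation (\<lambda>\<omega>. (coal_time n \<omega>)^2) = (\<Sum>k\<in>{1..<n}. ((hs k)^2 + gs k) * pmf (kappa_pmf n) k)"
    by auto
  define c where "c = 2 * (real n + 1) / (real n - 1)"
  define h where "h = H n 1"
  define g where "g = H n 2"
  have p: "pmf (kappa_pmf n) k = c * (1 / ((real k + 1) * (real k + 2)))" if "k \<in> {1..<n}" for k
    using that kappa_pmf_eq[OF n, of k] unfolding c_def by (simp add: divide_inverse mult_ac)
  have hk: "hs k = h - H k 1" "gs k = g - H k 2" if "k \<in> {1..<n}" for k
    using that H_split[of k n 1] H_split[of k n 2] unfolding hs_def gs_def h_def g_def by auto
  have n1: "n \<ge> 1" using n by simp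
  have S1: "(\<Sum>k\<in>{1..<n}. hs k * pmf (kappa_pmf n) k)
      = c * (h * (\<Sum>k\<in>{1..<n}. 1 / ((real k + 1) * (real k + 2))) - (\<Sum>k\<in>{1..<n}. H k 1 / ((real k + 1) * (real k + 2))))"
  proof -
    have "(\<Sum>k\<in>{1..<n}. hs k * pmf (kappa_pmf n) k)
        = (\<Sum>k\<in>{1..<n}. c * h * (1 / ((real k + 1) * (real k + 2))) - c * (H k 1 / ((real k + 1) * (real k + 2))))"
      by (intro sum.cong refl) (simp add: p hk divide_inverse algebra_simps)
    then show ?thesis by (simp add: sum_subtractf sum_distrib_left algebra_simps)
  qed
  have S2: "(\<Sum>k\<in>{1..<n}. ((hs k)^2 + gs k) * pmf (kappa_pmf n) k)
      = c * (h^2 * (\<Sum>k\<in>{1..<n}. 1 / ((real k + 1) * (real k + 2)))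
             - 2 * h * (\<Sum>k\<in>{1..<n}. H k 1 / ((real k + 1) * (real k + 2)))
             + (\<Sum>k\<in>{1..<n}. (H k 1)^2 / ((real k + 1) * (real k + 2)))
             + g * (\<Sum>k\<in>{1..<n}. 1 / ((real k + 1) * (real k + 2)))
             - (\<Sum>k\<in>{1..<n}. H k 2 / ((real k + 1) * (real k + 2))))"
  proof -
    have "(\<Sum>k\<in>{1..<n}. ((hs k)^2 + gs k) * pmf (kappa_pmf n) k)
        = (\<Sum>k\<in>{1..<n}. c * h^2 * (1 / ((real k + 1) * (real k + 2)))
            - 2 * c * h * (H k 1 / ((real k + 1) * (real k + 2)))
            + c * ((H k 1)^2 / ((real k + 1) * (real k + 2)))
            + c * g * (1 / ((real k + 1) * (real k + 2)))
            - c * (H k 2 / ((real k + 1) * (real k + 2))))"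
      by (intro sum.cong refl) (simp add: p hk divide_inverse algebra_simps power2_eq_square)
    then show ?thesis by (simp add: sum_subtractf sum.distrib sum_distrib_left algebra_simps)
  qed
  have "Y.variance (coal_time n) = Y.expectation (\<lambda>\<omega>. (coal_time n \<omega>)^2) - (Y.expectation (coal_time n))^2"
    by (rule Y.variance_eq) (use E1 E2 in auto)
  also have "\<dots> = c * (h^2 * ((real n - 1) / (2 * (real n + 1))) - 2 * h * ((real n - h) / (real n + 1)) + A3f (real n) h g
            + g * ((real n - 1) / (2 * (real n + 1))) - real n * (g - 1) / (real n + 1))
         - (c * (h * ((real n - 1) / (2 * (real n + 1))) - (real n - h) / (real n + 1)))^2"
    unfolding E1(2) E2(2) S1 S2 W_sum[OF n1] A1_sum[OF n1] A2_sum[OF n1] A3_sum[OF n1] h_def g_def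
    by simp
  also have "\<dots> = (real n + 1) / (real n - 1) * g - 2 * (real n + 1) / (real n - 1)^2 * h^2 + 4 * (real n + 1) / (real n - 1)^2 * h
              - 4 / (real n - 1) - 4 / (real n - 1)^2"
    unfolding c_def by (rule alg_final) (use n in simp)
  finally show ?thesis unfolding h_def g_def .
qed




lemma H2_lim: "(\<lambda>n. H n 2) \<longlonglongrightarrow> pi^2 / 6"
proof -
  have eq: "H n 2 = (\<Sum>i<n. 1 / real ((i + 1)^2))" for n
  proof (induction n)
    case 0 then show ?case by (simp add: H_def)
  next
    case (Suc n) then show ?case by (simp add: H_Suc add_ac)
  qed
  have "(\<lambda>n. \<Sum>i<n. 1 / real ((i + 1)^2)) \<longlonglongrightarrow> pi^2 / 6"
    using inverse_squares_sums by (simp only: sums_def)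
  then show ?thesis unfolding eq .
qed

lemma H1_bound: "n \<ge> 1 \<Longrightarrow> 0 \<le> H n 1 \<and> H n 1 \<le> 1 + ln (real n)"
proof -
  assume n: "n \<ge> 1"
  have eq: "H n 1 = harm n" unfolding H_def harm_def by (simp add: divide_inverse)
  have "harm n - ln (real n) \<le> harm 1 - ln (real 1)"
    by (rule euler_mascheroni_sequence_decreasing) (use n in auto)
  moreover have "harm 1 = (1::real)" by (simp add: harm_def)
  moreover have "0 \<le> (harm n :: real)" by (rule harm_nonneg)
  ultimately show ?thesis unfolding eq by simp
qed

lemma lim_zero_sandwich:
  fixes f u :: "nat \<Rightarrow> real"
  assumes "eventually (\<lambda>n. 0 \<le> f n \<and> f n \<le> u n) sequentially" "u \<longlonglongrightarrow> 0"
  shows "f \<longlonglongrightarrow> 0"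
proof (rule tendsto_sandwich[of "\<lambda>_. 0" f sequentially u])
  show "eventually (\<lambda>n. 0 \<le> f n) sequentially" using assms(1) by (rule eventually_mono) auto
  show "eventually (\<lambda>n. f n \<le> u n) sequentially" using assms(1) by (rule eventually_mono) auto
qed (use assms in auto)

lemma target_lim:
  "(\<lambda>n. (real n + 1) / (real n - 1) * H n 2
              - 2 * (real n + 1) / (real n - 1)^2 * (H n 1)^2
              + 4 * (real n + 1) / (real n - 1)^2 * H n 1
              - 4 / (real n - 1) - 4 / (real n - 1)^2) \<longlonglongrightarrow> pi^2 / 6"
proof -
  have a: "(\<lambda>n. (real n + 1) / (real n - 1)) \<longlonglongrightarrow> 1" by real_asymp
  have u1: "(\<lambda>n. 2 * (real n + 1) / (real n - 1)^2 * (1 + ln (real n))^2) \<longlonglongrightarrow> 0" by real_asymp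
  have u2: "(\<lambda>n. 4 * (real n + 1) / (real n - 1)^2 * (1 + ln (real n))) \<longlonglongrightarrow> 0" by real_asymp
  have d1: "(\<lambda>n. 4 / (real n - 1)) \<longlonglongrightarrow> 0" by real_asymp
  have d2: "(\<lambda>n. 4 / (real n - 1)^2) \<longlonglongrightarrow> 0" by real_asymp
  have b: "(\<lambda>n. 2 * (real n + 1) / (real n - 1)^2 * (H n 1)^2) \<longlonglongrightarrow> 0"
  proof (rule lim_zero_sandwich[OF _ u1])
    show "eventually (\<lambda>n. 0 \<le> 2 * (real n + 1) / (real n - 1)^2 * (H n 1)^2 \<and>
        2 * (real n + 1) / (real n - 1)^2 * (H n 1)^2 \<le> 2 * (real n + 1) / (real n - 1)^2 * (1 + ln (real n))^2) sequentially"
      using eventually_ge_at_top[of 1]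
    proof (rule eventually_mono)
      fix n :: nat assume n: "n \<ge> 1"
      have hb: "0 \<le> H n 1" "H n 1 \<le> 1 + ln (real n)" using H1_bound[OF n] by auto
      have "(H n 1)^2 \<le> (1 + ln (real n))^2" using hb by (intro power_mono) auto
      moreover have C: "0 \<le> 2 * (real n + 1) / (real n - 1)^2" by simp
      ultimately have "2 * (real n + 1) / (real n - 1)^2 * (H n 1)^2 \<le> 2 * (real n + 1) / (real n - 1)^2 * (1 + ln (real n))^2"
        by (rule mult_left_mono)
      then show "0 \<le> 2 * (real n + 1) / (real n - 1)^2 * (H n 1)^2 \<and>
        2 * (real n + 1) / (real n - 1)^2 * (H n 1)^2 \<le> 2 * (real n + 1) / (real n - 1)^2 * (1 + ln (real n))^2"
        using C by simp
    qed
  qed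
  have c: "(\<lambda>n. 4 * (real n + 1) / (real n - 1)^2 * H n 1) \<longlonglongrightarrow> 0"
  proof (rule lim_zero_sandwich[OF _ u2])
    show "eventually (\<lambda>n. 0 \<le> 4 * (real n + 1) / (real n - 1)^2 * H n 1 \<and>
        4 * (real n + 1) / (real n - 1)^2 * H n 1 \<le> 4 * (real n + 1) / (real n - 1)^2 * (1 + ln (real n))) sequentially"
      using eventually_ge_at_top[of 1]
    proof (rule eventually_mono)
      fix n :: nat assume n: "n \<ge> 1"
      have hb: "0 \<le> H n 1" "H n 1 \<le> 1 + ln (real n)" using H1_bound[OF n] by auto
      have C: "0 \<le> 4 * (real n + 1) / (real n - 1)^2" by simp
      have "4 * (real n + 1) / (real n - 1)^2 * H n 1 \<le> 4 * (real n + 1) / (real n - 1)^2 * (1 + ln (real n))"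
        using hb(2) C by (rule mult_left_mono)
      then show "0 \<le> 4 * (real n + 1) / (real n - 1)^2 * H n 1 \<and>
        4 * (real n + 1) / (real n - 1)^2 * H n 1 \<le> 4 * (real n + 1) / (real n - 1)^2 * (1 + ln (real n))"
        using C hb(1) by simp
    qed
  qed
  have "(\<lambda>n. (real n + 1) / (real n - 1) * H n 2
              - 2 * (real n + 1) / (real n - 1)^2 * (H n 1)^2
              + 4 * (real n + 1) / (real n - 1)^2 * H n 1
              - 4 / (real n - 1) - 4 / (real n - 1)^2) \<longlonglongrightarrow> 1 * (pi^2/6) - 0 + 0 - 0 - 0"
    by (intro tendsto_intros a H2_lim b c d1 d2)
  then show ?thesis by simp
qed


theorem lemmaY4p8:
  shows "(\<forall>n::nat. n \<ge> 2 \<longrightarrow>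
            prob_space.variance (yule_space n) (coal_time n) =
              (real n + 1) / (real n - 1) * H n 2
              - 2 * (real n + 1) / (real n - 1)^2 * (H n 1)^2
              + 4 * (real n + 1) / (real n - 1)^2 * H n 1
              - 4 / (real n - 1) - 4 / (real n - 1)^2)
       \<and> ((\<lambda>n. (real n + 1) / (real n - 1) * H n 2
              - 2 * (real n + 1) / (real n - 1)^2 * (H n 1)^2
              + 4 * (real n + 1) / (real n - 1)^2 * H n 1
              - 4 / (real n - 1) - 4 / (real n - 1)^2) \<longlonglongrightarrow> pi^2 / 6)"
    using variance_main target_lim by blast

end
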